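(* If graded posets $(P,\le_P)$ and $(Q,\le_Q)$ each admit a symmetric boolean decomposition, then the product poset $(P\times Q,\le_{P\times Q})$ admits a symmetric boolean decomposition.
   Context: The product order is $(p,q)\le_{P\times Q}(p',q')$ iff $p\le_P p'$ and $q\le_Q q'$; if $P,Q$ are graded of ranks $m,n$ then $P\times Q$ is graded of rank $m+n$ with $\mathrm{rk}(p,q)=\mathrm{rk}(p)+\mathrm{rk}(q)$. Let $\mathrm B_m$ be the boolean lattice of subsets of an $m$-element set. For a graded poset $R$ of rank $N$, a partition $\{R_1,\dots,R_k\}$ of $R$ is a symmetric boolean decomposition if for each $i$ there is an integer $j$ with $0\le j\le N/2$ and a bijection $\rho_i:\mathrm B_{N-2j}\to R_i$ that sends cover relations of $\mathrm B_{N-2j}$ to cover relations of $R$ and sends elements of rank $r$ to elements of rank $j+r$ in $R$. *)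

theory Defs
  imports Main "HOL-Library.Disjoint_Sets"
begin

definition partial_order_on_set :: "'a set \<Rightarrow> ('a \<Rightarrow> 'a \<Rightarrow> bool) \<Rightarrow> bool" where
  "partial_order_on_set R le \<longleftrightarrow>
     (\<forall>x\<in>R. le x x) \<and>
     (\<forall>x\<in>R. \<forall>y\<in>R. le x y \<and> le y x \<longrightarrow> x = y) \<and>
     (\<forall>x\<in>R. \<forall>y\<in>R. \<forall>z\<in>R. le x y \<and> le y z \<longrightarrow> le x z)"

definition covers :: "'a set \<Rightarrow> ('a \<Rightarrow> 'a \<Rightarrow> bool) \<Rightarrow> 'a \<Rightarrow> 'a \<Rightarrow> bool" where
  "covers R le x y \<longleftrightarrow> x \<in> R \<and> y \<in> R \<and> le x y \<and> x \<noteq> y \<and>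
     \<not> (\<exists>z\<in>R. le x z \<and> le z y \<and> z \<noteq> x \<and> z \<noteq> y)"

text \<open>Finite graded poset of rank N with rank function rk: minimal elements have
  rank 0, maximal elements have rank N, and covers raise the rank by one
  (equivalently, all maximal chains have length N).\<close>
definition graded_poset :: "'a set \<Rightarrow> ('a \<Rightarrow> 'a \<Rightarrow> bool) \<Rightarrow> ('a \<Rightarrow> nat) \<Rightarrow> nat \<Rightarrow> bool" where
  "graded_poset R le rk N \<longleftrightarrow>
     partial_order_on_set R le \<and> finite R \<and>
     (\<forall>x\<in>R. rk x \<le> N) \<and>
     (\<forall>x\<in>R. (\<forall>y\<in>R. le y x \<longrightarrow> y = x) \<longrightarrow> rk x = 0) \<and>
     (\<forall>x\<in>R. (\<forall>y\<in>R. le x y \<longrightarrow> y = x) \<longrightarrow> rk x = N) \<and>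
     (\<forall>x y. covers R le x y \<longrightarrow> rk y = rk x + 1)"

text \<open>Boolean lattice B_m: subsets of {0..<m} ordered by inclusion, rank = cardinality.\<close>
definition boolean_lattice :: "nat \<Rightarrow> nat set set" where
  "boolean_lattice m = Pow {0..<m}"

definition symmetric_boolean_decomposition ::
  "'a set \<Rightarrow> ('a \<Rightarrow> 'a \<Rightarrow> bool) \<Rightarrow> ('a \<Rightarrow> nat) \<Rightarrow> nat \<Rightarrow> 'a set set \<Rightarrow> bool" where
  "symmetric_boolean_decomposition R le rk N D \<longleftrightarrow>
     partition_on R D \<and>
     (\<forall>S\<in>D. \<exists>j::nat. 2 * j \<le> N \<and>
        (\<exists>\<rho> :: nat set \<Rightarrow> 'a.
           bij_betw \<rho> (boolean_lattice (N - 2 * j)) S \<and>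
           (\<forall>A B. covers (boolean_lattice (N - 2 * j)) (\<subseteq>) A B \<longrightarrow> covers R le (\<rho> A) (\<rho> B)) \<and>
           (\<forall>A\<in>boolean_lattice (N - 2 * j). rk (\<rho> A) = j + card A)))"

definition admits_sbd :: "'a set \<Rightarrow> ('a \<Rightarrow> 'a \<Rightarrow> bool) \<Rightarrow> ('a \<Rightarrow> nat) \<Rightarrow> nat \<Rightarrow> bool" where
  "admits_sbd R le rk N \<longleftrightarrow> (\<exists>D. symmetric_boolean_decomposition R le rk N D)"

definition prod_le :: "('a \<Rightarrow> 'a \<Rightarrow> bool) \<Rightarrow> ('b \<Rightarrow> 'b \<Rightarrow> bool) \<Rightarrow> 'a \<times> 'b \<Rightarrow> 'a \<times> 'b \<Rightarrow> bool" where
  "prod_le leP leQ x y \<longleftrightarrow> leP (fst x) (fst y) \<and> leQ (snd x) (snd y)"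

definition prod_rk :: "('a \<Rightarrow> nat) \<Rightarrow> ('b \<Rightarrow> nat) \<Rightarrow> 'a \<times> 'b \<Rightarrow> nat" where
  "prod_rk rkP rkQ x = rkP (fst x) + rkQ (snd x)"

end

theory Submission
  imports Defs
begin

lemma cover_pow:
  "covers (Pow U) (\<subseteq>) A B \<longleftrightarrow> A \<subseteq> U \<and> (\<exists>x\<in>U. x \<notin> A \<and> B = insert x A)"
proof
  assume c: "covers (Pow U) (\<subseteq>) A B"
  then have AB: "A \<subseteq> B" "A \<noteq> B" "B \<subseteq> U" and nz: "\<not> (\<exists>z\<in>Pow U. A \<subseteq> z \<and> z \<subseteq> B \<and> z \<noteq> A \<and> z \<noteq> B)"
    unfolding covers_def by auto
  then obtain x where x: "x \<in> B" "x \<notin> A" by blast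
  have "insert x A = B"
  proof (rule ccontr)
    assume "insert x A \<noteq> B"
    then show False using nz AB x by auto
  qed
  then show "A \<subseteq> U \<and> (\<exists>x\<in>U. x \<notin> A \<and> B = insert x A)" using AB x by auto
next
  assume "A \<subseteq> U \<and> (\<exists>x\<in>U. x \<notin> A \<and> B = insert x A)"
  then obtain x where x: "A \<subseteq> U" "x \<in> U" "x \<notin> A" "B = insert x A" by blast
  have "\<not> (\<exists>z\<in>Pow U. A \<subseteq> z \<and> z \<subseteq> B \<and> z \<noteq> A \<and> z \<noteq> B)"
  proof
    assume "\<exists>z\<in>Pow U. A \<subseteq> z \<and> z \<subseteq> B \<and> z \<noteq> A \<and> z \<noteq> B"
    then obtain z where "A \<subseteq> z" "z \<subseteq> insert x A" "z \<noteq> A" "z \<noteq> insert x A" using x by blast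
    then have "x \<in> z" by blast
    with \<open>A \<subseteq> z\<close> \<open>z \<subseteq> insert x A\<close> have "z = insert x A" by blast
    with \<open>z \<noteq> insert x A\<close> show False by blast
  qed
  then show "covers (Pow U) (\<subseteq>) A B" using x unfolding covers_def by auto
qed

definition splt :: "nat \<Rightarrow> nat set \<Rightarrow> nat set \<times> nat set" where
  "splt a A = (A \<inter> {0..<a}, (\<lambda>x. x - a) ` (A - {0..<a}))"

lemma splt_bij: "bij_betw (splt a) (Pow {0..<a+b}) (Pow {0..<a} \<times> Pow {0..<b})"
proof (rule bij_betw_byWitness[where f' = "\<lambda>(X,Y). X \<union> (\<lambda>x. x + a) ` Y"])
  show "\<forall>A\<in>Pow {0..<a + b}. (\<lambda>(X, Y). X \<union> (\<lambda>x. x + a) ` Y) (splt a A) = A"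
  proof
    fix A assume "A \<in> Pow {0..<a+b}"
    have "(\<lambda>x. x + a) ` (\<lambda>x. x - a) ` (A - {0..<a}) = (\<lambda>x. x - a + a) ` (A - {0..<a})"
      by (simp add: image_image)
    also have "\<dots> = id ` (A - {0..<a})"
      by (rule image_cong) auto
    finally have "(\<lambda>x. x + a) ` (\<lambda>x. x - a) ` (A - {0..<a}) = A - {0..<a}" by simp
    then show "(\<lambda>(X, Y). X \<union> (\<lambda>x. x + a) ` Y) (splt a A) = A"
      by (auto simp: splt_def)
  qed
  show "\<forall>a'\<in>Pow {0..<a} \<times> Pow {0..<b}. splt a ((\<lambda>(X, Y). X \<union> (\<lambda>x. x + a) ` Y) a') = a'"
  proof
    fix p assume p: "p \<in> Pow {0..<a} \<times> Pow {0..<b}"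
    obtain X Y where [simp]: "p = (X,Y)" by fastforce
    have "(X \<union> (\<lambda>x. x + a) ` Y) \<inter> {0..<a} = X" using p by auto
    moreover have "(X \<union> (\<lambda>x. x + a) ` Y) - {0..<a} = (\<lambda>x. x + a) ` Y" using p by auto
    moreover have "(\<lambda>x. x - a) ` (\<lambda>x. x + a) ` Y = Y" by (simp add: image_image)
    ultimately show "splt a ((\<lambda>(X, Y). X \<union> (\<lambda>x. x + a) ` Y) p) = p"
      by (simp add: splt_def)
  qed
  show "splt a ` Pow {0..<a + b} \<subseteq> Pow {0..<a} \<times> Pow {0..<b}"
    by (auto simp: splt_def)
  show "(\<lambda>(X, Y). X \<union> (\<lambda>x. x + a) ` Y) ` (Pow {0..<a} \<times> Pow {0..<b}) \<subseteq> Pow {0..<a + b}"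
    by auto
qed

lemma splt_card:
  assumes "A \<subseteq> {0..<c}"
  shows "card (fst (splt a A)) + card (snd (splt a A)) = card A"
proof -
  have fin: "finite A" using assms finite_subset by blast
  have "inj_on (\<lambda>x. x - a) (A - {0..<a})" by (auto simp: inj_on_def)
  then have "card ((\<lambda>x. x - a) ` (A - {0..<a})) = card (A - {0..<a})" by (rule card_image)
  moreover have "card (A \<inter> {0..<a}) + card (A - {0..<a}) = card A"
    using fin by (metis card_Int_Diff)
  ultimately show ?thesis by (simp add: splt_def)
qed

lemma cover_prod1:
  assumes po: "partial_order_on_set Q leQ" and c: "covers P leP p p'" and q: "q \<in> Q"
  shows "covers (P \<times> Q) (prod_le leP leQ) (p,q) (p',q)"
proof -
  have qq: "leQ q q" using po q unfolding partial_order_on_set_def by blast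
  have c1: "p \<in> P" "p' \<in> P" "leP p p'" "p \<noteq> p'"
    and c2: "\<And>z. z \<in> P \<Longrightarrow> leP p z \<Longrightarrow> leP z p' \<Longrightarrow> z = p \<or> z = p'"
    using c unfolding covers_def by auto
  have "\<not> (\<exists>z\<in>P \<times> Q. prod_le leP leQ (p,q) z \<and> prod_le leP leQ z (p',q) \<and> z \<noteq> (p,q) \<and> z \<noteq> (p',q))"
  proof
    assume "\<exists>z\<in>P \<times> Q. prod_le leP leQ (p,q) z \<and> prod_le leP leQ z (p',q) \<and> z \<noteq> (p,q) \<and> z \<noteq> (p',q)"
    then obtain z1 z2 where z: "z1 \<in> P" "z2 \<in> Q" "leP p z1" "leQ q z2" "leP z1 p'" "leQ z2 q"
      "(z1,z2) \<noteq> (p,q)" "(z1,z2) \<noteq> (p',q)" unfolding prod_le_def by auto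
    have "z2 = q" using po z q unfolding partial_order_on_set_def by blast
    then show False using c2[OF z(1,3,5)] z by auto
  qed
  then show ?thesis using c1 q qq unfolding covers_def prod_le_def by auto
qed

lemma cover_prod2:
  assumes po: "partial_order_on_set P leP" and c: "covers Q leQ q q'" and p: "p \<in> P"
  shows "covers (P \<times> Q) (prod_le leP leQ) (p,q) (p,q')"
proof -
  have pp: "leP p p" using po p unfolding partial_order_on_set_def by blast
  have c1: "q \<in> Q" "q' \<in> Q" "leQ q q'" "q \<noteq> q'"
    and c2: "\<And>z. z \<in> Q \<Longrightarrow> leQ q z \<Longrightarrow> leQ z q' \<Longrightarrow> z = q \<or> z = q'"
    using c unfolding covers_def by auto
  have "\<not> (\<exists>z\<in>P \<times> Q. prod_le leP leQ (p,q) z \<and> prod_le leP leQ z (p,q') \<and> z \<noteq> (p,q) \<and> z \<noteq> (p,q'))"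
  proof
    assume "\<exists>z\<in>P \<times> Q. prod_le leP leQ (p,q) z \<and> prod_le leP leQ z (p,q') \<and> z \<noteq> (p,q) \<and> z \<noteq> (p,q')"
    then obtain z1 z2 where z: "z1 \<in> P" "z2 \<in> Q" "leP p z1" "leQ q z2" "leP z1 p" "leQ z2 q'"
      "(z1,z2) \<noteq> (p,q)" "(z1,z2) \<noteq> (p,q')" unfolding prod_le_def by auto
    have "z1 = p" using po z p unfolding partial_order_on_set_def by blast
    then show False using c2[OF z(2,4,6)] z by auto
  qed
  then show ?thesis using c1 p pp unfolding covers_def prod_le_def by auto
qed

theorem mainTheorem16:
  fixes P :: "'a set" and leP :: "'a \<Rightarrow> 'a \<Rightarrow> bool" and rkP :: "'a \<Rightarrow> nat"
    and Q :: "'b set" and leQ :: "'b \<Rightarrow> 'b \<Rightarrow> bool" and rkQ :: "'b \<Rightarrow> nat"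
    and m n :: nat
  assumes "graded_poset P leP rkP m"
    and "graded_poset Q leQ rkQ n"
    and "admits_sbd P leP rkP m"
    and "admits_sbd Q leQ rkQ n"
  shows "admits_sbd (P \<times> Q) (prod_le leP leQ) (prod_rk rkP rkQ) (m + n)"
proof -
  have poP: "partial_order_on_set P leP" and poQ: "partial_order_on_set Q leQ"
    using assms(1,2) unfolding graded_poset_def by auto
  obtain D1 where D1: "symmetric_boolean_decomposition P leP rkP m D1"
    using assms(3) unfolding admits_sbd_def by blast
  obtain D2 where D2: "symmetric_boolean_decomposition Q leQ rkQ n D2"
    using assms(4) unfolding admits_sbd_def by blast
  have pD1: "partition_on P D1" and pD2: "partition_on Q D2"
    using D1 D2 unfolding symmetric_boolean_decomposition_def by auto
  define D where "D = (\<lambda>(S,T). S \<times> T) ` (D1 \<times> D2)"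
  have part: "partition_on (P \<times> Q) D"
  proof (rule partition_onI)
    show "\<Union>D = P \<times> Q"
      using partition_onD1[OF pD1] partition_onD1[OF pD2] unfolding D_def by auto
    show "{} \<notin> D"
    proof
      assume "{} \<in> D"
      then obtain S T where "S \<in> D1" "T \<in> D2" "{} = S \<times> T" unfolding D_def by auto
      then have "S = {} \<or> T = {}" by (metis Times_empty)
      then show False using \<open>S \<in> D1\<close> \<open>T \<in> D2\<close> partition_onD3[OF pD1] partition_onD3[OF pD2] by auto
    qed
    fix U V assume U: "U \<in> D" and V: "V \<in> D" and ne: "U \<noteq> V"
    then obtain S T S' T' where st: "S \<in> D1" "T \<in> D2" "S' \<in> D1" "T' \<in> D2"
      "U = S \<times> T" "V = S' \<times> T'" unfolding D_def by auto
    then have "S \<noteq> S' \<or> T \<noteq> T'" using ne by auto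
    then have "disjnt S S' \<or> disjnt T T'"
      using pairwiseD[OF partition_onD2[OF pD1], of S S'] pairwiseD[OF partition_onD2[OF pD2], of T T'] st
      by auto
    then show "disjnt U V" using st by (auto simp: disjnt_def)
  qed
  have "\<forall>U\<in>D. \<exists>j::nat. 2 * j \<le> m + n \<and>
        (\<exists>\<rho> :: nat set \<Rightarrow> 'a \<times> 'b.
           bij_betw \<rho> (boolean_lattice (m + n - 2 * j)) U \<and>
           (\<forall>A B. covers (boolean_lattice (m + n - 2 * j)) (\<subseteq>) A B \<longrightarrow>
              covers (P \<times> Q) (prod_le leP leQ) (\<rho> A) (\<rho> B)) \<and>
           (\<forall>A\<in>boolean_lattice (m + n - 2 * j). prod_rk rkP rkQ (\<rho> A) = j + card A))"
  proof
    fix U assume "U \<in> D"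
    then obtain S T where ST: "S \<in> D1" "T \<in> D2" "U = S \<times> T" unfolding D_def by auto
    have SP: "S \<subseteq> P" using ST partition_onD1[OF pD1] by auto
    have TQ: "T \<subseteq> Q" using ST partition_onD1[OF pD2] by auto
    obtain j \<rho>1 where j: "2 * j \<le> m" "bij_betw \<rho>1 (boolean_lattice (m - 2 * j)) S"
      "\<And>A B. covers (boolean_lattice (m - 2 * j)) (\<subseteq>) A B \<Longrightarrow> covers P leP (\<rho>1 A) (\<rho>1 B)"
      "\<And>A. A \<in> boolean_lattice (m - 2 * j) \<Longrightarrow> rkP (\<rho>1 A) = j + card A"
      using D1 ST(1) unfolding symmetric_boolean_decomposition_def by blast
    obtain k \<rho>2 where k: "2 * k \<le> n" "bij_betw \<rho>2 (boolean_lattice (n - 2 * k)) T"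
      "\<And>A B. covers (boolean_lattice (n - 2 * k)) (\<subseteq>) A B \<Longrightarrow> covers Q leQ (\<rho>2 A) (\<rho>2 B)"
      "\<And>A. A \<in> boolean_lattice (n - 2 * k) \<Longrightarrow> rkQ (\<rho>2 A) = k + card A"
      using D2 ST(2) unfolding symmetric_boolean_decomposition_def by blast
    define a where "a = m - 2 * j"
    define b where "b = n - 2 * k"
    have N: "m + n - 2 * (j + k) = a + b" using j(1) k(1) unfolding a_def b_def by simp
    define \<rho> where "\<rho> = map_prod \<rho>1 \<rho>2 \<circ> splt a"
    have bij: "bij_betw \<rho> (boolean_lattice (a + b)) U"
      unfolding \<rho>_def ST(3) boolean_lattice_def
      by (rule bij_betw_trans[OF splt_bij bij_betw_map_prod])
        (use j(2) k(2) in \<open>simp_all add: a_def b_def boolean_lattice_def\<close>)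
    have cov: "covers (P \<times> Q) (prod_le leP leQ) (\<rho> A) (\<rho> B)"
      if c: "covers (boolean_lattice (a + b)) (\<subseteq>) A B" for A B
    proof -
      obtain x where x: "A \<subseteq> {0..<a+b}" "x < a + b" "x \<notin> A" "B = insert x A"
        using c unfolding boolean_lattice_def cover_pow by auto
      show ?thesis
      proof (cases "x < a")
        case True
        have e1: "fst (splt a B) = insert x (fst (splt a A))" and e2: "snd (splt a B) = snd (splt a A)"
          using True x by (auto simp: splt_def)
        have "covers (boolean_lattice a) (\<subseteq>) (fst (splt a A)) (fst (splt a B))"
          unfolding e1 boolean_lattice_def cover_pow using True x by (auto simp: splt_def)
        then have c1: "covers P leP (\<rho>1 (fst (splt a A))) (\<rho>1 (fst (splt a B)))"
          using j(3) unfolding a_def by blast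
        have "snd (splt a A) \<in> boolean_lattice b"
          using x by (auto simp: splt_def boolean_lattice_def)
        then have "\<rho>2 (snd (splt a A)) \<in> Q" using k(2) TQ unfolding b_def bij_betw_def by auto
        from cover_prod1[OF poQ c1 this] show ?thesis
          unfolding \<rho>_def using e2 by (simp add: map_prod_def split_def)
      next
        case False
        have e1: "fst (splt a B) = fst (splt a A)"
          and e2: "snd (splt a B) = insert (x - a) (snd (splt a A))"
          using False x by (auto simp: splt_def)
        have nin: "x - a \<notin> snd (splt a A)"
        proof
          assume "x - a \<in> snd (splt a A)"
          then obtain y where "y \<in> A" "\<not> y < a" "x - a = y - a" by (auto simp: splt_def)
          then have "x = y" using False by simp
          then show False using x \<open>y \<in> A\<close> by simp
        qed
        have "covers (boolean_lattice b) (\<subseteq>) (snd (splt a A)) (snd (splt a B))"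
          unfolding e2 boolean_lattice_def cover_pow using False x nin by (auto simp: splt_def)
        then have c1: "covers Q leQ (\<rho>2 (snd (splt a A))) (\<rho>2 (snd (splt a B)))"
          using k(3) unfolding b_def by blast
        have "fst (splt a A) \<in> boolean_lattice a"
          using x by (auto simp: splt_def boolean_lattice_def)
        then have "\<rho>1 (fst (splt a A)) \<in> P" using j(2) SP unfolding a_def bij_betw_def by auto
        from cover_prod2[OF poP c1 this] show ?thesis
          unfolding \<rho>_def using e1 by (simp add: map_prod_def split_def)
      qed
    qed
    have rk: "prod_rk rkP rkQ (\<rho> A) = (j + k) + card A" if A: "A \<in> boolean_lattice (a + b)" for A
    proof -
      have A': "A \<subseteq> {0..<a+b}" using A by (simp add: boolean_lattice_def)
      have "fst (splt a A) \<in> boolean_lattice a" "snd (splt a A) \<in> boolean_lattice b"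
        using A' by (auto simp: splt_def boolean_lattice_def)
      then have "rkP (\<rho>1 (fst (splt a A))) = j + card (fst (splt a A))"
        "rkQ (\<rho>2 (snd (splt a A))) = k + card (snd (splt a A))"
        using j(4) k(4) unfolding a_def b_def by auto
      then show ?thesis using splt_card[OF A', of a]
        unfolding \<rho>_def prod_rk_def by (simp add: map_prod_def split_def)
    qed
    show "\<exists>j::nat. 2 * j \<le> m + n \<and>
        (\<exists>\<rho> :: nat set \<Rightarrow> 'a \<times> 'b.
           bij_betw \<rho> (boolean_lattice (m + n - 2 * j)) U \<and>
           (\<forall>A B. covers (boolean_lattice (m + n - 2 * j)) (\<subseteq>) A B \<longrightarrow>
              covers (P \<times> Q) (prod_le leP leQ) (\<rho> A) (\<rho> B)) \<and>
           (\<forall>A\<in>boolean_lattice (m + n - 2 * j). prod_rk rkP rkQ (\<rho> A) = j + card A))"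
      apply (rule exI[of _ "j + k"])
      apply (rule conjI)
      using j(1) k(1) apply simp
      apply (rule exI[of _ \<rho>])
      unfolding N using bij cov rk by simp
  qed
  then show ?thesis using part unfolding admits_sbd_def symmetric_boolean_decomposition_def by blast
qed

end
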